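(* For a Galton--Watson fractal model with contraction ratio $\rho$, there is a constant $c>0$ depending only on the model such that for all $s>0$ and all integers $0\le m<n$, \[ \mathbb{P}\bigl[\operatorname{Fav}(S_n)>Z_m\mu_{n-m}+s\bigm| S_m\bigr]\le\exp\Bigl(-\frac{c\,s^2}{Z_m\rho^m}\Bigr). \]
   Context: Galton--Watson (GW) fractal model: let $J_0\subset\mathbb{R}^2$ be a compact set equal to the closure of its interior, with finitely many connected components. Let $\mathfrak X=(\mathbf L;h_1(J_0),\dots,h_{\mathbf L}(J_0))$ be a random variable where $\mathbf L\in\{0,1,2,\dots\}$ is bounded, each $h_i$ is a homothety with contraction ratio $\rho\in(0,1)$ and $h_i(J_0)\subset J_0$, and $\mathbb{E}[\mathbf L]=\rho^{-1}$. Set $\mathcal{S}_0=\{J_0\}$, $S_0=J_0$; given $\mathcal{S}_n$, for each $R\in\mathcal{S}_n$ take an independent realization of $\mathfrak X$ (independent of $\mathcal{S}_n$) and let $\mathcal{S}_{n+1}$ consist of the images $g_R(h^R_i(J_0))$ where $g_R$ is the homothety with $g_R(J_0)=R$; $S_{n+1}=\bigcup\mathcal{S}_{n+1}$. $Z_m=\rho^m\#\mathcal{S}_m$, $\mu_k=\mathbb{E}[\operatorname{Fav}(S_k)]$, and conditioning on $S_m$ means conditioning on the realization of $\mathcal{S}_m$. $\operatorname{Fav}(A)=\int_0^\pi|\operatorname{proj}_\theta A|\,d\theta$ with $\operatorname{proj}_\theta(x)=\langle x,(-\sin\theta,\cos\theta)\rangle$. *)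

theory Defs
  imports "HOL-Analysis.Analysis" "HOL-Probability.Probability"
begin

definition proj :: "real \<Rightarrow> real^2 \<Rightarrow> real" where
  "proj \<theta> x = - sin \<theta> * (x $ 1) + cos \<theta> * (x $ 2)"

definition Fav :: "(real^2) set \<Rightarrow> real" where
  "Fav A = (LINT \<theta>:{0..pi}|lborel. measure lborel (proj \<theta> ` A))"

text \<open>One realization of the offspring variable X is a pair (L, a): the number L of children
  and translation vectors a i, the i-th child map being h_i x = rho x + a i (i < L).
  A realization of the whole GW process is an assignment of such a pair to every node of the
  (Ulam-Harris) tree; nodes are lists, the head being the last step.
  gw_pos rho w v = Some b iff the node v is alive, and then the piece attached to v is
  g_v(J0) with g_v x = rho^(length v) x + b.\<close>
fun gw_pos :: "real \<Rightarrow> (nat list \<Rightarrow> nat \<times> (nat \<Rightarrow> real^2)) \<Rightarrow> nat list \<Rightarrow> (real^2) option" where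
  "gw_pos \<rho> \<omega> [] = Some 0"
| "gw_pos \<rho> \<omega> (i # v) =
     (case gw_pos \<rho> \<omega> v of
        None \<Rightarrow> None
      | Some b \<Rightarrow> if i < fst (\<omega> v) then Some (b + (\<rho> ^ length v) *\<^sub>R snd (\<omega> v) i) else None)"

text \<open>Alive nodes of generation n (indexing the collection \<S>_n, with multiplicity).\<close>
definition gw_nodes :: "real \<Rightarrow> (nat list \<Rightarrow> nat \<times> (nat \<Rightarrow> real^2)) \<Rightarrow> nat \<Rightarrow> nat list set" where
  "gw_nodes \<rho> \<omega> n = {v. length v = n \<and> gw_pos \<rho> \<omega> v \<noteq> None}"

definition gw_S :: "(real^2) set \<Rightarrow> real \<Rightarrow> (nat list \<Rightarrow> nat \<times> (nat \<Rightarrow> real^2)) \<Rightarrow> nat \<Rightarrow> (real^2) set" where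
  "gw_S J0 \<rho> \<omega> n = (\<Union>v\<in>gw_nodes \<rho> \<omega> n. (\<lambda>x. (\<rho> ^ n) *\<^sub>R x + the (gw_pos \<rho> \<omega> v)) ` J0)"

definition gw_Z :: "real \<Rightarrow> (nat list \<Rightarrow> nat \<times> (nat \<Rightarrow> real^2)) \<Rightarrow> nat \<Rightarrow> real" where
  "gw_Z \<rho> \<omega> n = \<rho> ^ n * real (card (gw_nodes \<rho> \<omega> n))"

definition gw_space :: "(nat \<times> (nat \<Rightarrow> real^2)) measure \<Rightarrow> (nat list \<Rightarrow> nat \<times> (nat \<Rightarrow> real^2)) measure" where
  "gw_space D = (\<Pi>\<^sub>M v\<in>UNIV. D)"

text \<open>The information up to generation m: the sigma-algebra generated by the offspring
  variables of all nodes of depth < m (these determine \<S>_m).\<close>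
definition gw_filt :: "(nat \<times> (nat \<Rightarrow> real^2)) measure \<Rightarrow> nat \<Rightarrow> (nat list \<Rightarrow> nat \<times> (nat \<Rightarrow> real^2)) measure" where
  "gw_filt D m = vimage_algebra (space (gw_space D)) (\<lambda>\<omega>. restrict \<omega> {v. length v < m})
                   (\<Pi>\<^sub>M v\<in>{v. length v < m}. D)"

end

theory Submission
  imports Defs
begin

type_synonym gwom = "nat list \<Rightarrow> nat \<times> (nat \<Rightarrow> real^2)"

fun alive :: "gwom \<Rightarrow> nat list \<Rightarrow> bool" where
  "alive \<omega> [] = True"
| "alive \<omega> (i # v) = (alive \<omega> v \<and> i < fst (\<omega> v))"

fun posf :: "real \<Rightarrow> gwom \<Rightarrow> nat list \<Rightarrow> real^2" where
  "posf \<rho> \<omega> [] = 0"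
| "posf \<rho> \<omega> (i # v) = posf \<rho> \<omega> v + (\<rho> ^ length v) *\<^sub>R snd (\<omega> v) i"

definition shiftw :: "nat list \<Rightarrow> gwom \<Rightarrow> gwom" where
  "shiftw v \<omega> = (\<lambda>u. \<omega> (u @ v))"

lemma gw_pos_eq: "gw_pos \<rho> \<omega> v = (if alive \<omega> v then Some (posf \<rho> \<omega> v) else None)"
  by (induction v) auto

lemma gw_nodes_eq: "gw_nodes \<rho> \<omega> n = {v. length v = n \<and> alive \<omega> v}"
  unfolding gw_nodes_def gw_pos_eq by auto

lemma gw_S_eq: "gw_S J0 \<rho> \<omega> n = (\<Union>v\<in>{v. length v = n \<and> alive \<omega> v}. (\<lambda>x. (\<rho> ^ n) *\<^sub>R x + posf \<rho> \<omega> v) ` J0)"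
  unfolding gw_S_def gw_nodes_eq gw_pos_eq by auto

lemma nodes_Suc: "{v. length v = Suc n \<and> alive \<omega> v} = (\<Union>v\<in>{v. length v = n \<and> alive \<omega> v}. (\<lambda>i. i # v) ` {..<fst (\<omega> v)})"
  apply (auto simp: length_Suc_conv)
  done

lemma finite_nodes: "finite {v. length v = n \<and> alive \<omega> v}"
  by (induction n) (auto simp: nodes_Suc)

lemma alive_append: "alive \<omega> (u @ v) \<longleftrightarrow> alive \<omega> v \<and> alive (shiftw v \<omega>) u"
  by (induction u) (auto simp: shiftw_def)

lemma posf_append: "posf \<rho> \<omega> (u @ v) = posf \<rho> \<omega> v + (\<rho> ^ length v) *\<^sub>R posf \<rho> (shiftw v \<omega>) u"
  by (induction u) (auto simp: shiftw_def power_add algebra_simps)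

lemma nodes_add: "{w. length w = k + m \<and> alive \<omega> w} =
   (\<Union>v\<in>{v. length v = m \<and> alive \<omega> v}. (\<lambda>u. u @ v) ` {u. length u = k \<and> alive (shiftw v \<omega>) u})"
proof safe
  fix w assume w: "length w = k + m" "alive \<omega> w"
  let ?u = "take k w" and ?v = "drop k w"
  show "w \<in> (\<Union>v\<in>{v. length v = m \<and> alive \<omega> v}. (\<lambda>u. u @ v) ` {u. length u = k \<and> alive (shiftw v \<omega>) u})"
  proof (rule UN_I[of ?v])
    have "w = ?u @ ?v" by simp
    then show "?v \<in> {v. length v = m \<and> alive \<omega> v}" using w alive_append[of \<omega> ?u ?v] by (simp del: append_take_drop_id)
    show "w \<in> (\<lambda>u. u @ ?v) ` {u. length u = k \<and> alive (shiftw ?v \<omega>) u}"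
      using w alive_append[of \<omega> ?u ?v] by (intro image_eqI[of _ _ ?u]) (auto simp: min_def)
  qed
qed (auto simp: alive_append)

lemma gw_S_add: "gw_S J0 \<rho> \<omega> (k + m) =
  (\<Union>v\<in>{v. length v = m \<and> alive \<omega> v}. (\<lambda>y. (\<rho> ^ m) *\<^sub>R y + posf \<rho> \<omega> v) ` gw_S J0 \<rho> (shiftw v \<omega>) k)"
proof -
  have "gw_S J0 \<rho> \<omega> (k + m) = (\<Union>v\<in>{v. length v = m \<and> alive \<omega> v}. \<Union>u\<in>{u. length u = k \<and> alive (shiftw v \<omega>) u}.
      (\<lambda>x. (\<rho> ^ (k+m)) *\<^sub>R x + posf \<rho> \<omega> (u @ v)) ` J0)"
    unfolding gw_S_eq nodes_add by auto
  also have "\<dots> = (\<Union>v\<in>{v. length v = m \<and> alive \<omega> v}. \<Union>u\<in>{u. length u = k \<and> alive (shiftw v \<omega>) u}.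
      (\<lambda>y. (\<rho> ^ m) *\<^sub>R y + posf \<rho> \<omega> v) ` (\<lambda>x. (\<rho> ^ k) *\<^sub>R x + posf \<rho> (shiftw v \<omega>) u) ` J0)"
    by (auto simp: posf_append image_image power_add algebra_simps intro!: SUP_cong image_cong)
  also have "\<dots> = (\<Union>v\<in>{v. length v = m \<and> alive \<omega> v}. (\<lambda>y. (\<rho> ^ m) *\<^sub>R y + posf \<rho> \<omega> v) ` gw_S J0 \<rho> (shiftw v \<omega>) k)"
    unfolding gw_S_eq by (simp add: image_UN)
  finally show ?thesis .
qed

definition good :: "(real^2) set \<Rightarrow> real \<Rightarrow> nat \<times> (nat \<Rightarrow> real^2) \<Rightarrow> bool" where
  "good J0 \<rho> d \<longleftrightarrow> (\<forall>i < fst d. (\<lambda>x. \<rho> *\<^sub>R x + snd d i) ` J0 \<subseteq> J0)"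

lemma gw_S_sub: assumes "\<forall>v. good J0 \<rho> (\<omega> v)" shows "gw_S J0 \<rho> \<omega> k \<subseteq> J0"
proof (induction k)
  case 0 then show ?case by (auto simp: gw_S_eq)
next
  case (Suc k)
  have "gw_S J0 \<rho> \<omega> (Suc k) \<subseteq> gw_S J0 \<rho> \<omega> k"
  proof
    fix y assume "y \<in> gw_S J0 \<rho> \<omega> (Suc k)"
    then obtain v i x where v: "length v = k" "alive \<omega> v" "i < fst (\<omega> v)" and x: "x \<in> J0"
      and y: "y = (\<rho> ^ Suc k) *\<^sub>R x + posf \<rho> \<omega> (i # v)"
      unfolding gw_S_eq nodes_Suc by auto
    have "\<rho> *\<^sub>R x + snd (\<omega> v) i \<in> J0" using assms v x unfolding good_def by auto
    moreover have "y = (\<rho> ^ k) *\<^sub>R (\<rho> *\<^sub>R x + snd (\<omega> v) i) + posf \<rho> \<omega> v"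
      using y v by (simp add: algebra_simps)
    ultimately show "y \<in> gw_S J0 \<rho> \<omega> k" using v unfolding gw_S_eq by auto
  qed
  then show ?case using Suc by blast
qed

lemma compact_gw_S: assumes "compact J0" shows "compact (gw_S J0 \<rho> \<omega> k)"
  unfolding gw_S_eq
  by (intro compact_UN finite_nodes compact_continuous_image continuous_intros assms)

lemma sin_lip: fixes a b :: real shows "\<bar>sin a - sin b\<bar> \<le> \<bar>a - b\<bar>"
proof -
  have "\<bar>sin a - sin b\<bar> = 2 * \<bar>sin ((a - b) / 2)\<bar> * \<bar>cos ((a + b) / 2)\<bar>"
    by (simp add: sin_diff_sin abs_mult)
  also have "\<dots> \<le> 2 * \<bar>(a - b) / 2\<bar> * 1"
    by (intro mult_mono abs_sin_x_le_abs_x) auto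
  finally show ?thesis by simp
qed

lemma cos_lip: fixes a b :: real shows "\<bar>cos a - cos b\<bar> \<le> \<bar>a - b\<bar>"
proof -
  have "\<bar>cos a - cos b\<bar> = 2 * \<bar>sin ((a + b) / 2)\<bar> * \<bar>sin ((b - a) / 2)\<bar>"
    by (simp add: cos_diff_cos abs_mult)
  also have "\<dots> \<le> 2 * 1 * \<bar>(b - a) / 2\<bar>"
    by (intro mult_mono abs_sin_x_le_abs_x) auto
  finally show ?thesis by simp
qed

lemma proj_affine: "proj \<theta> (r *\<^sub>R x + b) = r * proj \<theta> x + proj \<theta> b"
  by (simp add: proj_def algebra_simps)

lemma proj_diff: "proj \<theta> x - proj \<theta> y = proj \<theta> (x - y)"
  by (simp add: proj_def algebra_simps)

lemma proj_bound: "\<bar>proj \<theta> x\<bar> \<le> 2 * norm x"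
proof -
  have "\<bar>proj \<theta> x\<bar> \<le> \<bar>sin \<theta>\<bar> * \<bar>x$1\<bar> + \<bar>cos \<theta>\<bar> * \<bar>x$2\<bar>"
    unfolding proj_def using abs_triangle_ineq[of "- sin \<theta> * x $ 1" "cos \<theta> * x $ 2"] by (simp add: abs_mult)
  also have "\<dots> \<le> 1 * norm x + 1 * norm x"
    by (intro add_mono mult_mono component_le_norm_cart) auto
  finally show ?thesis by simp
qed

lemma proj_theta_lip: "\<bar>proj \<theta>' x - proj \<theta> x\<bar> \<le> 2 * \<bar>\<theta>' - \<theta>\<bar> * norm x"
proof -
  have "proj \<theta>' x - proj \<theta> x = - (sin \<theta>' - sin \<theta>) * x$1 + (cos \<theta>' - cos \<theta>) * x$2"
    unfolding proj_def by (simp add: algebra_simps)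
  then have "\<bar>proj \<theta>' x - proj \<theta> x\<bar> \<le> \<bar>sin \<theta>' - sin \<theta>\<bar> * \<bar>x$1\<bar> + \<bar>cos \<theta>' - cos \<theta>\<bar> * \<bar>x$2\<bar>"
    using abs_triangle_ineq[of "- (sin \<theta>' - sin \<theta>) * x $ 1" "(cos \<theta>' - cos \<theta>) * x $ 2"] by (simp only: abs_mult abs_minus_cancel)
  also have "\<dots> \<le> \<bar>\<theta>' - \<theta>\<bar> * norm x + \<bar>\<theta>' - \<theta>\<bar> * norm x"
    by (intro add_mono mult_mono component_le_norm_cart sin_lip cos_lip) auto
  finally show ?thesis by (simp add: algebra_simps)
qed

lemma continuous_proj[continuous_intros]: "continuous_on S f \<Longrightarrow> continuous_on S (\<lambda>x. proj \<theta> (f x))"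
  unfolding proj_def by (intro continuous_intros)

lemma compact_proj: "compact A \<Longrightarrow> compact (proj \<theta> ` A)"
  by (intro compact_continuous_image continuous_proj continuous_on_id)

lemma thick_decseq: "decseq (\<lambda>j::nat. (\<Union>z\<in>C. ball z (1 / Suc j)) :: real set)"
  unfolding decseq_def
proof (intro allI impI)
  fix m n :: nat assume "m \<le> n"
  then have le: "1 / real (Suc n) \<le> 1 / Suc m" by (simp add: frac_le)
  show "(\<Union>z\<in>C. ball z (1 / Suc n)) \<le> (\<Union>z\<in>C. ball z (1 / Suc m))"
  proof
    fix x assume "x \<in> (\<Union>z\<in>C. ball z (1 / Suc n))"
    then obtain z where "z \<in> C" "dist z x < 1 / Suc n" by auto
    then show "x \<in> (\<Union>z\<in>C. ball z (1 / Suc m))" using le by (intro UN_I[of z]) auto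
  qed
qed

lemma thick_Inter: assumes "closed (C :: real set)" shows "(\<Inter>j::nat. (\<Union>z\<in>C. ball z (1 / Suc j))) = C"
proof
  show "C \<subseteq> (\<Inter>j::nat. (\<Union>z\<in>C. ball z (1 / Suc j)))"
  proof
    fix x assume "x \<in> C"
    then show "x \<in> (\<Inter>j::nat. (\<Union>z\<in>C. ball z (1 / Suc j)))" by (intro INT_I UN_I[of x]) auto
  qed
  show "(\<Inter>j::nat. (\<Union>z\<in>C. ball z (1 / Suc j))) \<subseteq> C"
  proof
    fix x assume x: "x \<in> (\<Inter>j::nat. (\<Union>z\<in>C. ball z (1 / Suc j)))"
    have "x \<in> closure C"
      unfolding closure_approachable
    proof (intro allI impI)
      fix e :: real assume "e > 0"
      then obtain j :: nat where j: "1 / Suc j < e" using nat_approx_posE by blast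
      from x have "x \<in> (\<Union>z\<in>C. ball z (1 / Suc j))" by blast
      then obtain z where "z \<in> C" "dist z x < 1 / Suc j" by auto
      then show "\<exists>y\<in>C. dist y x < e" using j by (intro bexI[of _ z]) auto
    qed
    then show "x \<in> C" using assms by (simp add: closure_closed)
  qed
qed

lemma thick_bounded: assumes "bounded (C :: real set)" shows "bounded (\<Union>z\<in>C. ball z (1 / Suc j))"
proof -
  obtain R where R: "\<forall>z\<in>C. norm z \<le> R" using assms bounded_iff by blast
  have "(\<Union>z\<in>C. ball z (1 / Suc j)) \<subseteq> cball 0 (R + 1)"
  proof
    fix x assume "x \<in> (\<Union>z\<in>C. ball z (1 / Suc j))"
    then obtain z where z: "z \<in> C" "dist z x < 1 / Suc j" by auto
    have "1 / real (Suc j) \<le> 1" by (simp add: field_simps)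
    then have "dist z x \<le> 1" using z by linarith
    moreover have "norm x \<le> norm z + dist z x"
      using norm_triangle_sub[of x z] by (simp add: dist_norm norm_minus_commute)
    moreover have "norm z \<le> R" using R z by blast
    ultimately show "x \<in> cball 0 (R + 1)" by simp
  qed
  then show ?thesis using bounded_cball bounded_subset by blast
qed

lemma usc_measure_open:
  fixes C :: "'a::topological_space \<Rightarrow> real set"
  assumes cpt: "\<And>p. compact (C p)"
    and hemi: "\<And>p e. e > 0 \<Longrightarrow> eventually (\<lambda>q. \<forall>y\<in>C q. \<exists>z\<in>C p. dist y z < e) (nhds p)"
  shows "open {p. measure lborel (C p) < a}"
proof (subst open_subopen, intro ballI)
  fix p assume "p \<in> {p. measure lborel (C p) < a}"
  then have pa: "measure lborel (C p) < a" by simp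
  define T where "T j = (\<Union>z\<in>C p. ball z (1 / Suc j))" for j :: nat
  have Topen: "open (T j)" for j unfolding T_def by (intro open_UN ballI open_ball)
  have Tsets: "T j \<in> sets lborel" for j using Topen[of j] by simp
  have Tfin: "emeasure lborel (T j) \<noteq> \<infinity>" for j
    using emeasure_bounded_finite[OF thick_bounded[OF compact_imp_bounded[OF cpt]]] unfolding T_def by (simp add: top.not_eq_extremum)
  have "(\<lambda>j. measure lborel (T j)) \<longlonglongrightarrow> measure lborel (\<Inter>j. T j)"
  proof (rule Lim_measure_decseq)
    show "range T \<subseteq> sets lborel" using Tsets by auto
    show "decseq T" unfolding T_def[abs_def] by (rule thick_decseq)
  qed (rule Tfin)
  then have "(\<lambda>j. measure lborel (T j)) \<longlonglongrightarrow> measure lborel (C p)"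
    unfolding T_def thick_Inter[OF compact_imp_closed[OF cpt]] .
  then have "eventually (\<lambda>j. measure lborel (T j) < a) sequentially"
    using pa by (rule order_tendstoD)
  then obtain j where j: "measure lborel (T j) < a" unfolding eventually_sequentially by blast
  have "eventually (\<lambda>q. \<forall>y\<in>C q. \<exists>z\<in>C p. dist y z < 1 / Suc j) (nhds p)"
    by (rule hemi) simp
  then obtain S where S: "open S" "p \<in> S" "\<And>q. q \<in> S \<Longrightarrow> \<forall>y\<in>C q. \<exists>z\<in>C p. dist y z < 1 / Suc j"
    unfolding eventually_nhds by blast
  have "S \<subseteq> {p. measure lborel (C p) < a}"
  proof
    fix q assume "q \<in> S"
    have "C q \<subseteq> T j"
    proof
      fix y assume "y \<in> C q"
      then obtain z where "z \<in> C p" "dist y z < 1 / Suc j" using S(3)[OF \<open>q \<in> S\<close>] by blast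
      then show "y \<in> T j" unfolding T_def by (auto simp: dist_commute)
    qed
    moreover have "C q \<in> sets lborel" using cpt[of q] by (simp add: borel_compact)
    moreover have "T j \<in> fmeasurable lborel" using Tsets[of j] Tfin[of j] by (intro fmeasurableI) (auto simp: top.not_eq_extremum)
    ultimately have "measure lborel (C q) \<le> measure lborel (T j)"
      by (rule measure_mono_fmeasurable)
    then show "q \<in> {p. measure lborel (C p) < a}" using j by simp
  qed
  then show "\<exists>T. open T \<and> p \<in> T \<and> T \<subseteq> {p. measure lborel (C p) < a}"
    using S by blast
qed

lemma usc_measure_measurable:
  fixes C :: "'a::topological_space \<Rightarrow> real set"
  assumes "\<And>p. compact (C p)"
    and "\<And>p e. e > 0 \<Longrightarrow> eventually (\<lambda>q. \<forall>y\<in>C q. \<exists>z\<in>C p. dist y z < e) (nhds p)"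
  shows "(\<lambda>p. measure lborel (C p)) \<in> borel_measurable borel"
  unfolding borel_measurable_iff_less
  using usc_measure_open[OF assms] by simp

definition pm :: "real \<Rightarrow> (real^2) set \<Rightarrow> real" where
  "pm \<theta> A = measure lborel (proj \<theta> ` A)"

lemma Fav_pm: "Fav A = (LINT \<theta>:{0..pi}|lborel. pm \<theta> A)"
  unfolding Fav_def pm_def ..

lemma compact_bound: assumes "compact (A :: (real^2) set)" obtains R where "R \<ge> 0" "\<forall>x\<in>A. norm x \<le> R"
proof -
  obtain R where "\<forall>x\<in>A. norm x \<le> R" using compact_imp_bounded[OF assms] bounded_iff by blast
  then show ?thesis using that[of "max R 0"] by fastforce
qed

lemma pm_measurable:
  assumes "compact A" shows "(\<lambda>\<theta>. pm \<theta> A) \<in> borel_measurable borel"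
  unfolding pm_def
proof (rule usc_measure_measurable)
  show "compact (proj \<theta> ` A)" for \<theta> using assms by (rule compact_proj)
  obtain R where R: "R \<ge> 0" "\<forall>x\<in>A. norm x \<le> R" using compact_bound[OF assms] by blast
  fix \<theta> :: real and e :: real assume "e > 0"
  show "eventually (\<lambda>\<theta>'. \<forall>y\<in>proj \<theta>' ` A. \<exists>z\<in>proj \<theta> ` A. dist y z < e) (nhds \<theta>)"
    unfolding eventually_nhds_metric
  proof (intro exI[of _ "e / (2 * R + 1)"] conjI allI impI ballI)
    show "e / (2 * R + 1) > 0" using \<open>e > 0\<close> R by simp
    fix \<theta>' y assume d: "dist \<theta>' \<theta> < e / (2 * R + 1)" and y: "y \<in> proj \<theta>' ` A"
    then obtain x where x: "x \<in> A" "y = proj \<theta>' x" by auto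
    have "dist y (proj \<theta> x) \<le> 2 * \<bar>\<theta>' - \<theta>\<bar> * norm x"
      using proj_theta_lip[of \<theta>' x \<theta>] x by (simp add: dist_real_def)
    also have "\<dots> \<le> 2 * \<bar>\<theta>' - \<theta>\<bar> * R" using R x by (intro mult_left_mono) auto
    also have "\<dots> \<le> \<bar>\<theta>' - \<theta>\<bar> * (2 * R + 1)" by (simp add: algebra_simps)
    also have "\<dots> < e"
      using d R by (simp add: dist_real_def field_simps)
    finally show "\<exists>z\<in>proj \<theta> ` A. dist y z < e" using x by blast
  qed
qed

lemma pm_nonneg: "0 \<le> pm \<theta> A" unfolding pm_def by simp

lemma pm_bound:
  assumes "compact A" "R \<ge> 0" "\<forall>x\<in>A. norm x \<le> R" shows "pm \<theta> A \<le> 4 * R"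
proof -
  have "proj \<theta> ` A \<subseteq> {-2*R..2*R}"
  proof
    fix y assume "y \<in> proj \<theta> ` A"
    then obtain x where x: "x \<in> A" "y = proj \<theta> x" by auto
    have "\<bar>y\<bar> \<le> 2 * R" using proj_bound[of \<theta> x] assms(3) x by fastforce
    then show "y \<in> {-2*R..2*R}" by (simp add: abs_le_iff)
  qed
  then have "pm \<theta> A \<le> measure lborel {-2*R..2*R}"
    unfolding pm_def using compact_proj[OF assms(1)]
    by (intro measure_mono_fmeasurable) (auto simp: borel_compact fmeasurable_compact)
  also have "\<dots> = 4 * R" using assms by simp
  finally show ?thesis .
qed

lemma pm_integrable:
  assumes "compact A" shows "set_integrable lborel {0..pi} (\<lambda>\<theta>. pm \<theta> A)"
proof -
  obtain R where R: "R \<ge> 0" "\<forall>x\<in>A. norm x \<le> R" using compact_bound[OF assms] by blast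
  show ?thesis
    unfolding set_integrable_def
    by (rule integrableI_bounded_set_indicator[where B="4 * R"])
       (use pm_measurable[OF assms] pm_bound[OF assms R] pm_nonneg in auto)
qed

lemma Fav_nonneg: "0 \<le> Fav A"
  unfolding Fav_pm set_lebesgue_integral_def by (intro Bochner_Integration.integral_nonneg) (auto simp: pm_nonneg indicator_def)

lemma pm_mono: assumes "compact B" "A \<subseteq> B" "compact A" shows "pm \<theta> A \<le> pm \<theta> B"
  unfolding pm_def
  using compact_proj[OF assms(1)] compact_proj[OF assms(3)] assms(2)
  by (intro measure_mono_fmeasurable image_mono) (auto simp: borel_compact fmeasurable_compact)

lemma Fav_mono: assumes "compact B" "A \<subseteq> B" "compact A" shows "Fav A \<le> Fav B"
  unfolding Fav_pm
  by (intro set_integral_mono pm_integrable assms pm_mono)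

lemma Fav_bound: assumes "compact A" obtains K where "\<forall>B. compact B \<and> B \<subseteq> A \<longrightarrow> Fav B \<le> K"
  using Fav_mono[OF assms] by blast

lemma pm_UN_le:
  assumes "finite V" "\<And>v. v \<in> V \<Longrightarrow> compact (A v)"
  shows "pm \<theta> (\<Union>v\<in>V. A v) \<le> (\<Sum>v\<in>V. pm \<theta> (A v))"
  unfolding pm_def image_UN
  using assms by (intro measure_UNION_le) (auto simp: borel_compact compact_proj)

lemma Fav_UN_le:
  assumes "finite V" "\<And>v. v \<in> V \<Longrightarrow> compact (A v)"
  shows "Fav (\<Union>v\<in>V. A v) \<le> (\<Sum>v\<in>V. Fav (A v))"
proof -
  have cU: "compact (\<Union>v\<in>V. A v)" using assms by (intro compact_UN) auto
  have "Fav (\<Union>v\<in>V. A v) \<le> (LINT \<theta>:{0..pi}|lborel. (\<Sum>v\<in>V. pm \<theta> (A v)))"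
    unfolding Fav_pm
  proof (intro set_integral_mono pm_integrable cU pm_UN_le assms)
    show "set_integrable lborel {0..pi} (\<lambda>\<theta>. \<Sum>v\<in>V. pm \<theta> (A v))"
      unfolding set_integrable_def scaleR_sum_right
      by (rule Bochner_Integration.integrable_sum) (rule pm_integrable[unfolded set_integrable_def], rule assms)
  qed auto
  also have "\<dots> = (\<Sum>v\<in>V. Fav (A v))"
    unfolding Fav_pm set_lebesgue_integral_def scaleR_sum_right
    by (rule Bochner_Integration.integral_sum) (rule pm_integrable[unfolded set_integrable_def], rule assms)
  finally show ?thesis .
qed

lemma pm_affine:
  assumes "compact A" "r > 0"
  shows "pm \<theta> ((\<lambda>x. r *\<^sub>R x + b) ` A) = r * pm \<theta> A"
proof -
  let ?P = "proj \<theta> ` A"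
  have P: "compact ?P" using assms(1) by (rule compact_proj)
  have e: "proj \<theta> ` ((\<lambda>x. r *\<^sub>R x + b) ` A) = (\<lambda>t. r *\<^sub>R t + proj \<theta> b) ` ?P"
    by (simp add: image_image proj_affine)
  have c: "compact ((\<lambda>t. r *\<^sub>R t + proj \<theta> b) ` ?P)"
    by (rule compact_continuous_image[OF _ P]) (intro continuous_intros)
  have "measure lborel ((\<lambda>t. r *\<^sub>R t + proj \<theta> b) ` ?P) = measure lebesgue ((\<lambda>t. r *\<^sub>R t + proj \<theta> b) ` ?P)"
    using c by (intro measure_completion[symmetric]) (simp add: borel_compact)
  also have "\<dots> = \<bar>r\<bar> ^ DIM(real) * measure lebesgue ?P" by (rule measure_lebesgue_affine)
  also have "\<dots> = r * measure lborel ?P" using P assms(2) by (simp add: borel_compact)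
  finally show ?thesis unfolding pm_def e .
qed

lemma Fav_affine:
  assumes "compact A" "r > 0"
  shows "Fav ((\<lambda>x. r *\<^sub>R x + b) ` A) = r * Fav A"
  unfolding Fav_pm pm_affine[OF assms] set_lebesgue_integral_def
  by (simp add: integral_mult_right_zero[symmetric] ac_simps del: integral_mult_right_zero)

lemma tendsto_coord: "((\<lambda>\<omega>::gwom. \<omega> v) \<longlongrightarrow> \<omega> v) (nhds \<omega>)"
proof -
  have c: "continuous_on UNIV (\<lambda>\<omega>::gwom. \<omega> v)" by simp
  have "((\<lambda>\<omega>::gwom. \<omega> v) \<longlongrightarrow> \<omega> v) (at \<omega>)" using c unfolding continuous_on_def by auto
  then show ?thesis using tendsto_at_iff_tendsto_nhds[of "\<lambda>\<omega>::gwom. \<omega> v" \<omega>] by simp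
qed

lemma eventually_fst_eq: "eventually (\<lambda>\<omega>'::gwom. fst (\<omega>' v) = fst (\<omega> v)) (nhds \<omega>)"
proof -
  have "((\<lambda>\<omega>'::gwom. fst (\<omega>' v)) \<longlongrightarrow> fst (\<omega> v)) (nhds \<omega>)"
    by (intro tendsto_fst tendsto_coord)
  then have "eventually (\<lambda>\<omega>'::gwom. fst (\<omega>' v) \<in> {fst (\<omega> v)}) (nhds \<omega>)"
  proof (rule topological_tendstoD)
    show "open {fst (\<omega> v)}" by (rule discrete_topology_class.open_discrete)
  qed simp
  then show ?thesis by simp
qed

lemma tendsto_posf: "((\<lambda>\<omega>'::gwom. posf \<rho> \<omega>' v) \<longlongrightarrow> posf \<rho> \<omega> v) (nhds \<omega>)"
proof (induction v)
  case Nil then show ?case by simp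
next
  case (Cons i v)
  have "((\<lambda>\<omega>'::gwom. snd (\<omega>' v) i) \<longlongrightarrow> snd (\<omega> v) i) (nhds \<omega>)"
  proof -
    have "((\<lambda>\<omega>'::gwom. snd (\<omega>' v)) \<longlongrightarrow> snd (\<omega> v)) (nhds \<omega>)"
      by (intro tendsto_snd tendsto_coord)
    moreover have "continuous_on UNIV (\<lambda>f::nat \<Rightarrow> real^2. f i)" by simp
    ultimately show ?thesis
      using continuous_on_tendsto_compose[of UNIV "\<lambda>f::nat \<Rightarrow> real^2. f i"] by fastforce
  qed
  then show ?case using Cons by (simp add: tendsto_intros)
qed

lemma eventually_nodes_eq:
  "eventually (\<lambda>\<omega>'::gwom. {v. length v = k \<and> alive \<omega>' v} = {v. length v = k \<and> alive \<omega> v}) (nhds \<omega>)"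
proof (induction k)
  case 0
  have "{v. length v = 0 \<and> alive \<omega>' v} = {[]}" for \<omega>' by auto
  then show ?case by simp
next
  case (Suc k)
  have "eventually (\<lambda>\<omega>'. \<forall>v\<in>{v. length v = k \<and> alive \<omega> v}. fst (\<omega>' v) = fst (\<omega> v)) (nhds \<omega>)"
    by (intro eventually_ball_finite finite_nodes ballI eventually_fst_eq)
  with Suc show ?case
    by eventually_elim (simp add: nodes_Suc)
qed

lemma eventually_posf_close:
  assumes "d > 0"
  shows "eventually (\<lambda>\<omega>'::gwom. \<forall>v\<in>{v. length v = k \<and> alive \<omega> v}. dist (posf \<rho> \<omega>' v) (posf \<rho> \<omega> v) < d) (nhds \<omega>)"
  by (intro eventually_ball_finite finite_nodes ballI)
     (use tendsto_posf[of \<rho> v \<omega> for v] assms in \<open>auto simp: tendsto_iff\<close>)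

lemma gw_S_bound: assumes "compact J0" obtains R where "R \<ge> 0" "\<forall>x\<in>gw_S J0 \<rho> \<omega> k. norm x \<le> R"
  using compact_bound[OF compact_gw_S[OF assms]] by blast

lemma hemi_gw:
  assumes J0: "compact J0" and e: "e > 0"
  shows "eventually (\<lambda>q. \<forall>y\<in>proj (snd q) ` gw_S J0 \<rho> (fst q) k.
            \<exists>z\<in>proj \<theta> ` gw_S J0 \<rho> \<omega> k. dist y z < e) (nhds (\<omega>, \<theta>))"
proof -
  obtain R where R: "R \<ge> 0" "\<forall>x\<in>gw_S J0 \<rho> \<omega> k. norm x \<le> R" using gw_S_bound[OF J0] by blast
  define d where "d = e / (2 * R + 3)"
  have d: "d > 0" using e R by (simp add: d_def)
  have de: "2 * d + 2 * d * R < e"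
  proof -
    have "2 * d + 2 * d * R = d * (2 * R + 2)" by (simp add: algebra_simps)
    also have "\<dots> < d * (2 * R + 3)" using d by simp
    also have "\<dots> = e" using R by (simp add: d_def)
    finally show ?thesis .
  qed
  let ?Pf = "\<lambda>\<omega>'. {v. length v = k \<and> alive \<omega>' v} = {v. length v = k \<and> alive \<omega> v} \<and>
      (\<forall>v\<in>{v. length v = k \<and> alive \<omega> v}. dist (posf \<rho> \<omega>' v) (posf \<rho> \<omega> v) < d)"
  let ?Pg = "\<lambda>\<theta>'. dist \<theta>' \<theta> < d"
  have ef: "eventually ?Pf (nhds \<omega>)"
    using eventually_nodes_eq[of k \<omega>] eventually_posf_close[OF d, of k \<omega> \<rho>] by eventually_elim auto
  have eg: "eventually ?Pg (nhds \<theta>)" using d by (auto simp: eventually_nhds_metric)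
  show ?thesis
    unfolding nhds_prod eventually_prod_filter
  proof (intro exI[of _ ?Pf] exI[of _ ?Pg] conjI ef eg allI impI)
    fix \<omega>' \<theta>' assume f: "?Pf \<omega>'" and g: "?Pg \<theta>'"
    show "\<forall>y\<in>proj (snd (\<omega>', \<theta>')) ` gw_S J0 \<rho> (fst (\<omega>', \<theta>')) k. \<exists>z\<in>proj \<theta> ` gw_S J0 \<rho> \<omega> k. dist y z < e"
    proof
      fix y assume "y \<in> proj (snd (\<omega>', \<theta>')) ` gw_S J0 \<rho> (fst (\<omega>', \<theta>')) k"
      then obtain v x where v: "length v = k" "alive \<omega> v" and x: "x \<in> J0"
        and y: "y = proj \<theta>' ((\<rho> ^ k) *\<^sub>R x + posf \<rho> \<omega>' v)"
        using f unfolding gw_S_eq by auto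
      define w where "w = (\<rho> ^ k) *\<^sub>R x + posf \<rho> \<omega> v"
      have wS: "w \<in> gw_S J0 \<rho> \<omega> k" unfolding gw_S_eq w_def using v x by auto
      have dw: "norm ((\<rho> ^ k) *\<^sub>R x + posf \<rho> \<omega>' v - w) < d"
        using f v by (simp add: w_def dist_norm)
      have "dist y (proj \<theta> w) \<le> \<bar>proj \<theta>' ((\<rho> ^ k) *\<^sub>R x + posf \<rho> \<omega>' v - w)\<bar> + \<bar>proj \<theta>' w - proj \<theta> w\<bar>"
        unfolding y dist_real_def proj_diff[symmetric] by linarith
      also have "\<dots> \<le> 2 * norm ((\<rho> ^ k) *\<^sub>R x + posf \<rho> \<omega>' v - w) + 2 * \<bar>\<theta>' - \<theta>\<bar> * norm w"
        by (intro add_mono proj_bound proj_theta_lip)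
      also have "\<dots> \<le> 2 * d + 2 * d * R"
      proof (intro add_mono mult_left_mono mult_mono)
        show "norm w \<le> R" using R wS by blast
        show "\<bar>\<theta>' - \<theta>\<bar> \<le> d" using g by (simp add: dist_real_def)
      qed (use dw d in auto)
      also have "\<dots> < e" by (rule de)
      finally show "\<exists>z\<in>proj \<theta> ` gw_S J0 \<rho> \<omega> k. dist y z < e" using wS by blast
    qed
  qed
qed

lemma pmS_measurable:
  assumes "compact J0"
  shows "(\<lambda>q::gwom \<times> real. pm (snd q) (gw_S J0 \<rho> (fst q) k)) \<in> borel_measurable borel"
  unfolding pm_def
proof (rule usc_measure_measurable)
  show "compact (proj (snd q) ` gw_S J0 \<rho> (fst q) k)" for q
    by (intro compact_proj compact_gw_S assms)
  fix q :: "gwom \<times> real" and e :: real assume "e > 0"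
  then show "eventually (\<lambda>q'. \<forall>y\<in>proj (snd q') ` gw_S J0 \<rho> (fst q') k. \<exists>z\<in>proj (snd q) ` gw_S J0 \<rho> (fst q) k. dist y z < e) (nhds q)"
    using hemi_gw[OF assms \<open>e > 0\<close>, where \<rho>=\<rho> and k=k and \<omega>="fst q" and \<theta>="snd q"] by simp
qed

lemma Fav_gw_S_borel:
  assumes "compact J0"
  shows "(\<lambda>\<omega>::gwom. Fav (gw_S J0 \<rho> \<omega> k)) \<in> borel_measurable borel"
proof -
  have "(\<lambda>q::gwom \<times> real. indicator {0..pi} (snd q) *\<^sub>R pm (snd q) (gw_S J0 \<rho> (fst q) k)) \<in> borel_measurable borel"
  proof (rule borel_measurable_scaleR)
    have "(\<lambda>q::gwom \<times> real. snd q) \<in> borel_measurable borel"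
      by (intro borel_measurable_continuous_onI continuous_intros)
    then show "(\<lambda>q::gwom \<times> real. indicator {0..pi} (snd q) :: real) \<in> borel_measurable borel"
      using measurable_comp[of "\<lambda>q::gwom \<times> real. snd q" borel borel "indicator {0..pi}" borel]
      by (simp add: o_def)
  qed (rule pmS_measurable[OF assms])
  then have m: "(\<lambda>q::gwom \<times> real. indicator {0..pi} (snd q) *\<^sub>R pm (snd q) (gw_S J0 \<rho> (fst q) k)) \<in> borel_measurable (borel \<Otimes>\<^sub>M lborel)"
  proof -
    have "sets (borel \<Otimes>\<^sub>M lborel) = sets (borel \<Otimes>\<^sub>M (borel :: real measure))"
      by (intro sets_pair_measure_cong) auto
    also have "\<dots> = sets (borel :: (gwom \<times> real) measure)" by (simp only: borel_prod)
    finally show ?thesis using measurable_cong_sets[OF _ refl] \<open>_ \<in> borel_measurable borel\<close> by blast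
  qed
  have "(\<lambda>\<omega>::gwom. \<integral>\<theta>. indicator {0..pi} \<theta> *\<^sub>R pm \<theta> (gw_S J0 \<rho> \<omega> k) \<partial>lborel) \<in> borel_measurable borel"
    by (rule lborel.borel_measurable_lebesgue_integral) (use m in \<open>simp add: case_prod_beta'\<close>)
  then show ?thesis unfolding Fav_pm set_lebesgue_integral_def .
qed

lemma gw_Z_alive: "gw_Z \<rho> \<omega> m = \<rho> ^ m * real (card {v. length v = m \<and> alive \<omega> v})"
  unfolding gw_Z_def gw_nodes_eq ..

lemma gw_Z_borel: "(\<lambda>\<omega>::gwom. gw_Z \<rho> \<omega> m) \<in> borel_measurable borel"
proof (rule borel_measurable_continuous_onI)
  show "continuous_on UNIV (\<lambda>\<omega>::gwom. gw_Z \<rho> \<omega> m)"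
    unfolding continuous_on_def gw_Z_alive
  proof (intro ballI tendsto_eventually)
    fix \<omega> :: gwom
    show "eventually (\<lambda>\<omega>'. \<rho> ^ m * real (card {v. length v = m \<and> alive \<omega>' v}) = \<rho> ^ m * real (card {v. length v = m \<and> alive \<omega> v})) (at \<omega> within UNIV)"
    proof (rule filter_leD[OF at_within_le_nhds])
      show "eventually (\<lambda>\<omega>'. \<rho> ^ m * real (card {v. length v = m \<and> alive \<omega>' v}) = \<rho> ^ m * real (card {v. length v = m \<and> alive \<omega> v})) (nhds \<omega>)"
        using eventually_nodes_eq[of m \<omega>] by (rule eventually_mono) simp
    qed
  qed
qed

lemma distr_merge_infinite:
  fixes I J :: "'i set" and M :: "'i \<Rightarrow> 'a measure"
  assumes M: "\<And>i. prob_space (M i)" and IJ: "I \<inter> J = {}"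
  shows "distr (PiM I M \<Otimes>\<^sub>M PiM J M) (PiM (I \<union> J) M) (merge I J) = PiM (I \<union> J) M"
proof (rule measure_eqI_PiM_infinite[symmetric, OF refl])
  interpret P1: prob_space "PiM I M" using M by (intro prob_space_PiM) auto
  interpret P2: prob_space "PiM J M" using M by (intro prob_space_PiM) auto
  interpret P12: pair_sigma_finite "PiM I M" "PiM J M" ..
  interpret PU: prob_space "PiM (I \<union> J) M" using M by (intro prob_space_PiM) auto
  show "finite_measure (PiM (I \<union> J) M)" by unfold_locales
  show "sets (distr (Pi\<^sub>M I M \<Otimes>\<^sub>M Pi\<^sub>M J M) (Pi\<^sub>M (I \<union> J) M) (merge I J)) = sets (Pi\<^sub>M (I \<union> J) M)"
    by simp
  fix A F assume F: "finite F" "F \<subseteq> I \<union> J" and A: "\<And>i. i \<in> F \<Longrightarrow> A i \<in> sets (M i)"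
  let ?X = "prod_emb (I \<union> J) M F (Pi\<^sub>E F A)"
  have FI: "finite (F \<inter> I)" "F \<inter> I \<subseteq> I" and FJ: "finite (F \<inter> J)" "F \<inter> J \<subseteq> J" using F by auto
  have "emeasure (PiM (I \<union> J) M) ?X = (\<Prod>i\<in>F. emeasure (M i) (A i))"
    using F A M by (intro emeasure_PiM_emb) auto
  also have "\<dots> = (\<Prod>i\<in>F \<inter> I. emeasure (M i) (A i)) * (\<Prod>i\<in>F \<inter> J. emeasure (M i) (A i))"
  proof -
    have "F = (F \<inter> I) \<union> (F \<inter> J)" using F by auto
    then show ?thesis using IJ F by (subst prod.union_disjoint[symmetric]) auto
  qed
  also have "\<dots> = emeasure (PiM I M) (prod_emb I M (F \<inter> I) (Pi\<^sub>E (F \<inter> I) A)) *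
                  emeasure (PiM J M) (prod_emb J M (F \<inter> J) (Pi\<^sub>E (F \<inter> J) A))"
    using FI FJ A M by (subst (1 2) emeasure_PiM_emb) auto
  also have "\<dots> = emeasure (PiM I M \<Otimes>\<^sub>M PiM J M)
      (prod_emb I M (F \<inter> I) (Pi\<^sub>E (F \<inter> I) A) \<times> prod_emb J M (F \<inter> J) (Pi\<^sub>E (F \<inter> J) A))"
    using FI FJ A by (intro P2.emeasure_pair_measure_Times[symmetric] sets_PiM_I) auto
  also have "prod_emb I M (F \<inter> I) (Pi\<^sub>E (F \<inter> I) A) \<times> prod_emb J M (F \<inter> J) (Pi\<^sub>E (F \<inter> J) A)
      = merge I J -` ?X \<inter> space (PiM I M \<Otimes>\<^sub>M PiM J M)"
  proof (intro set_eqI iffI)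
    fix p assume p: "p \<in> prod_emb I M (F \<inter> I) (Pi\<^sub>E (F \<inter> I) A) \<times> prod_emb J M (F \<inter> J) (Pi\<^sub>E (F \<inter> J) A)"
    obtain x y where xy: "p = (x, y)" by (cases p)
    from p xy have x: "x \<in> extensional I" "\<forall>i\<in>F \<inter> I. x i \<in> A i" "\<forall>i\<in>I. x i \<in> space (M i)"
      and y: "y \<in> extensional J" "\<forall>i\<in>F \<inter> J. y i \<in> A i" "\<forall>i\<in>J. y i \<in> space (M i)"
      by (auto simp: prod_emb_iff PiE_iff)
    have "merge I J (x, y) \<in> ?X"
      unfolding prod_emb_iff
    proof (intro conjI)
      show "merge I J (x, y) \<in> extensional (I \<union> J)" by (auto simp: merge_def extensional_def)
      show "restrict (merge I J (x, y)) F \<in> Pi\<^sub>E F A"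
        using x y F by (auto simp: PiE_iff merge_def)
      show "\<forall>i\<in>I \<union> J. merge I J (x, y) i \<in> space (M i)"
        using x y by (auto simp: merge_def)
    qed
    moreover have "p \<in> space (PiM I M \<Otimes>\<^sub>M PiM J M)"
      using x y xy by (auto simp: space_pair_measure space_PiM PiE_iff)
    ultimately show "p \<in> merge I J -` ?X \<inter> space (PiM I M \<Otimes>\<^sub>M PiM J M)" using xy by simp
  next
    fix p assume p: "p \<in> merge I J -` ?X \<inter> space (PiM I M \<Otimes>\<^sub>M PiM J M)"
    obtain x y where xy: "p = (x, y)" by (cases p)
    from p xy have x: "x \<in> extensional I" "\<forall>i\<in>I. x i \<in> space (M i)"
      and y: "y \<in> extensional J" "\<forall>i\<in>J. y i \<in> space (M i)"
      and m: "restrict (merge I J (x, y)) F \<in> Pi\<^sub>E F A"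
      by (auto simp: space_pair_measure space_PiM PiE_iff prod_emb_iff)
    have "\<forall>i\<in>F \<inter> I. x i \<in> A i"
    proof
      fix i assume i: "i \<in> F \<inter> I"
      then have "merge I J (x, y) i \<in> A i" using m by (auto simp: PiE_iff)
      then show "x i \<in> A i" using i by (simp add: merge_def)
    qed
    moreover have "\<forall>i\<in>F \<inter> J. y i \<in> A i"
    proof
      fix i assume i: "i \<in> F \<inter> J"
      then have "merge I J (x, y) i \<in> A i" using m by (auto simp: PiE_iff)
      moreover have "i \<notin> I" using i IJ by auto
      ultimately show "y i \<in> A i" using i by (simp add: merge_def)
    qed
    ultimately show "p \<in> prod_emb I M (F \<inter> I) (Pi\<^sub>E (F \<inter> I) A) \<times> prod_emb J M (F \<inter> J) (Pi\<^sub>E (F \<inter> J) A)"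
      using x y xy by (auto simp: prod_emb_iff PiE_iff extensional_def)
  qed
  also have "emeasure (PiM I M \<Otimes>\<^sub>M PiM J M) (merge I J -` ?X \<inter> space (PiM I M \<Otimes>\<^sub>M PiM J M))
      = emeasure (distr (PiM I M \<Otimes>\<^sub>M PiM J M) (PiM (I \<union> J) M) (merge I J)) ?X"
    using F A by (intro emeasure_distr[symmetric] measurable_merge sets_PiM_I) auto
  finally show "emeasure (PiM (I \<union> J) M) ?X = emeasure (distr (PiM I M \<Otimes>\<^sub>M PiM J M) (PiM (I \<union> J) M) (merge I J)) ?X" .
qed

lemma indep_coords:
  fixes K :: "'i set" and M :: "'i \<Rightarrow> 'a measure"
  assumes M: "\<And>i. prob_space (M i)" and K: "K \<noteq> {}"
  shows "prob_space.indep_vars (PiM K M) M (\<lambda>i \<omega>. \<omega> i) K"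
proof -
  interpret P: prob_space "PiM K M" using M by (intro prob_space_PiM) auto
  define X where "X i \<omega> = (if i \<in> K then \<omega> i else (SOME x. x \<in> space (M i)))" for i and \<omega> :: "'i \<Rightarrow> 'a"
  have ne: "(SOME x. x \<in> space (M i)) \<in> space (M i)" for i
    using prob_space.not_empty[OF M[of i]] by (simp add: some_in_eq)
  have rv: "P.random_variable (M i) (X i)" for i
  proof (cases "i \<in> K")
    case True
    have "X i = (\<lambda>\<omega>. \<omega> i)" using True by (simp add: X_def fun_eq_iff)
    moreover have "(\<lambda>\<omega>. \<omega> i) \<in> measurable (PiM K M) (M i)" using True by (rule measurable_component_singleton)
    ultimately show ?thesis by simp
  next
    case False then show ?thesis unfolding X_def using ne[of i] by simp
  qed
  have "P.indep_vars M X K"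
  proof (subst P.indep_vars_iff_distr_eq_PiM[OF K rv])
    have "distr (PiM K M) (PiM K M) (\<lambda>x. \<lambda>i\<in>K. X i x) = distr (PiM K M) (PiM K M) (\<lambda>x. x)"
      by (intro distr_cong) (auto simp: X_def space_PiM PiE_iff extensional_def restrict_def fun_eq_iff)
    also have "\<dots> = PiM K M" by simp
    also have "\<dots> = (\<Pi>\<^sub>M i\<in>K. distr (PiM K M) (M i) (X i))"
    proof (intro PiM_cong refl)
      fix i assume "i \<in> K"
      then have "distr (PiM K M) (M i) (X i) = distr (PiM K M) (M i) (\<lambda>\<omega>. \<omega> i)"
        by (intro distr_cong) (auto simp: X_def)
      also have "\<dots> = M i" using M \<open>i \<in> K\<close> by (intro distr_PiM_component) auto
      finally show "M i = distr (PiM K M) (M i) (X i)" by simp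
    qed
    finally show "distr (PiM K M) (\<Pi>\<^sub>M i\<in>K. M i) (\<lambda>x. \<lambda>i\<in>K. X i x) = (\<Pi>\<^sub>M i\<in>K. distr (PiM K M) (M i) (X i))" .
  qed
  then show ?thesis
    by (rule P.indep_vars_cong[THEN iffD1, rotated 3]) (auto simp: X_def)
qed

lemma sets_D_borel:
  assumes "sets D = sets (count_space UNIV \<Otimes>\<^sub>M (\<Pi>\<^sub>M i\<in>(UNIV::nat set). (borel :: (real^2) measure)))"
  shows "sets D = sets (borel :: (nat \<times> (nat \<Rightarrow> real^2)) measure)"
proof -
  have "sets (count_space UNIV \<Otimes>\<^sub>M (\<Pi>\<^sub>M i\<in>(UNIV::nat set). (borel :: (real^2) measure)))
      = sets ((borel :: nat measure) \<Otimes>\<^sub>M (borel :: (nat \<Rightarrow> real^2) measure))"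
    by (intro sets_pair_measure_cong sets_PiM_equal_borel) (simp add: sets_borel_eq_count_space)
  also have "\<dots> = sets (borel :: (nat \<times> (nat \<Rightarrow> real^2)) measure)" by (simp only: borel_prod)
  finally show ?thesis using assms by simp
qed

definition Iset :: "nat \<Rightarrow> nat list set" where "Iset m = {v. length v < m}"

locale gwl =
  fixes J0 :: "(real^2) set" and \<rho> :: real and D :: "(nat \<times> (nat \<Rightarrow> real^2)) measure"
  assumes J0: "compact J0" and rho: "0 < \<rho>" and D: "prob_space D"
    and setsD: "sets D = sets (count_space UNIV \<Otimes>\<^sub>M (\<Pi>\<^sub>M i\<in>(UNIV::nat set). (borel :: (real^2) measure)))"
    and goodAE: "AE d in D. good J0 \<rho> d"
begin

abbreviation "\<Omega> \<equiv> gw_space D"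

lemma Omega_def: "\<Omega> = PiM UNIV (\<lambda>_. D)" unfolding gw_space_def ..

lemma prob_PiM: "prob_space (PiM K (\<lambda>_. D))" by (intro prob_space_PiM D)

lemma prob_Omega: "prob_space \<Omega>" unfolding Omega_def by (rule prob_PiM)

lemma sets_Omega: "sets \<Omega> = sets (borel :: gwom measure)"
proof -
  have "sets \<Omega> = sets (PiM (UNIV :: nat list set) (\<lambda>_. (borel :: (nat \<times> (nat \<Rightarrow> real^2)) measure)))"
    unfolding Omega_def by (intro sets_PiM_cong refl sets_D_borel setsD)
  also have "\<dots> = sets (borel :: gwom measure)" by (rule sets_PiM_equal_borel)
  finally show ?thesis .
qed

lemma Fav_meas[measurable]: "(\<lambda>\<omega>. Fav (gw_S J0 \<rho> \<omega> k)) \<in> borel_measurable \<Omega>"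
  using Fav_gw_S_borel[OF J0] measurable_cong_sets[OF sets_Omega[symmetric] refl] by blast

lemma Z_meas[measurable]: "(\<lambda>\<omega>. gw_Z \<rho> \<omega> m) \<in> borel_measurable \<Omega>"
  using gw_Z_borel measurable_cong_sets[OF sets_Omega[symmetric] refl] by blast

lemma AE_good_PiM: "AE y in PiM (K::nat list set) (\<lambda>_. D). \<forall>v\<in>K. good J0 \<rho> (y v)"
proof -
  have "AE y in PiM K (\<lambda>_. D). \<forall>v\<in>K. good J0 \<rho> (y v)"
    by (intro AE_ball_countable[THEN iffD2] ballI AE_PiM_component[OF D] goodAE) (auto intro: countableI_type)
  then show ?thesis .
qed

lemma Fav_le_J0: assumes "\<forall>v. good J0 \<rho> (\<omega> v)" shows "Fav (gw_S J0 \<rho> \<omega> k) \<le> Fav J0"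
  by (intro Fav_mono J0 compact_gw_S gw_S_sub assms)

lemma distr_shift:
  assumes "length v \<ge> m"
  shows "distr (PiM (- Iset m) (\<lambda>_. D)) \<Omega> (\<lambda>y u. y (u @ v)) = \<Omega>"
proof -
  have "distr (PiM (- Iset m) (\<lambda>_. D)) (PiM UNIV (\<lambda>_. D)) (\<lambda>\<omega>. \<lambda>n\<in>UNIV. \<omega> (n @ v)) = PiM UNIV (\<lambda>_. D)"
    using assms by (intro distr_PiM_reindex D) (auto simp: inj_on_def Iset_def)
  then show ?thesis unfolding Omega_def restrict_UNIV .
qed

lemma shift_meas: "(\<lambda>y u. y (u @ v)) \<in> measurable (PiM K (\<lambda>_. D)) \<Omega>"
  if "\<And>u. u @ v \<in> K"
proof -
  have "(\<lambda>y. \<lambda>u\<in>UNIV. y (u @ v)) \<in> measurable (PiM K (\<lambda>_. D)) (PiM UNIV (\<lambda>_. D))"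
    using that by (intro measurable_restrict measurable_component_singleton)
  then show ?thesis unfolding Omega_def restrict_UNIV .
qed

end

lemma alive_dep: "(\<And>w. length w < length v \<Longrightarrow> \<omega> w = \<omega>' w) \<Longrightarrow> alive \<omega> v = alive \<omega>' v"
  by (induction v) auto

context gwl begin

lemma merge_I_apply: "length w < m \<Longrightarrow> merge (Iset m) (- Iset m) (x, y) w = x w"
  by (simp add: merge_def Iset_def)

lemma merge_nI_apply: "length w \<ge> m \<Longrightarrow> merge (Iset m) (- Iset m) (x, y) w = y w"
  by (simp add: merge_def Iset_def)

lemma alive_merge: "length v = m \<Longrightarrow> alive (merge (Iset m) (- Iset m) (x, y)) v = alive x v"
  by (rule alive_dep) (simp add: merge_I_apply)

lemma nodes_merge: "{v. length v = m \<and> alive (merge (Iset m) (- Iset m) (x, y)) v} = {v. length v = m \<and> alive x v}"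
  using alive_merge by blast

lemma shift_merge: "length v = m \<Longrightarrow> shiftw v (merge (Iset m) (- Iset m) (x, y)) = (\<lambda>u. y (u @ v))"
  by (auto simp: shiftw_def merge_nI_apply fun_eq_iff)

lemma Fav_merge_le:
  "Fav (gw_S J0 \<rho> (merge (Iset m) (- Iset m) (x, y)) (k + m)) \<le>
     (\<Sum>v\<in>{v. length v = m \<and> alive x v}. \<rho> ^ m * Fav (gw_S J0 \<rho> (\<lambda>u. y (u @ v)) k))"
proof -
  let ?w = "merge (Iset m) (- Iset m) (x, y)"
  have "Fav (gw_S J0 \<rho> ?w (k + m)) = Fav (\<Union>v\<in>{v. length v = m \<and> alive x v}.
           (\<lambda>z. (\<rho> ^ m) *\<^sub>R z + posf \<rho> ?w v) ` gw_S J0 \<rho> (\<lambda>u. y (u @ v)) k)"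
    unfolding gw_S_add nodes_merge
    by (intro arg_cong[where f=Fav] SUP_cong refl) (simp add: shift_merge)
  also have "\<dots> \<le> (\<Sum>v\<in>{v. length v = m \<and> alive x v}. Fav ((\<lambda>z. (\<rho> ^ m) *\<^sub>R z + posf \<rho> ?w v) ` gw_S J0 \<rho> (\<lambda>u. y (u @ v)) k))"
    by (intro Fav_UN_le finite_nodes compact_continuous_image continuous_intros compact_gw_S J0)
  also have "\<dots> = (\<Sum>v\<in>{v. length v = m \<and> alive x v}. \<rho> ^ m * Fav (gw_S J0 \<rho> (\<lambda>u. y (u @ v)) k))"
    using rho by (intro sum.cong refl Fav_affine compact_gw_S J0) simp
  finally show ?thesis .
qed

definition "Kc = max (Fav J0) 1"

lemma Kc_pos: "Kc > 0" unfolding Kc_def by simp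

lemma inner_bound:
  fixes x :: gwom and m k :: nat and s :: real
  assumes s: "s > 0"
  defines "N \<equiv> {v. length v = m \<and> alive x v}"
  defines "\<mu> \<equiv> (\<integral>\<omega>. Fav (gw_S J0 \<rho> \<omega> k) \<partial>\<Omega>)"
  shows "emeasure (PiM (- Iset m) (\<lambda>_. D))
           {y \<in> space (PiM (- Iset m) (\<lambda>_. D)). Fav (gw_S J0 \<rho> (merge (Iset m) (- Iset m) (x, y)) (k + m)) > \<rho> ^ m * real (card N) * \<mu> + s}
        \<le> ennreal (exp (- (2 / Kc\<^sup>2 * s\<^sup>2) / (\<rho> ^ m * real (card N) * \<rho> ^ m)))"
proof -
  let ?M2 = "PiM (- Iset m) (\<lambda>_. D)"
  interpret M2: prob_space ?M2 by (rule prob_PiM)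
  let ?E = "{y \<in> space ?M2. Fav (gw_S J0 \<rho> (merge (Iset m) (- Iset m) (x, y)) (k + m)) > \<rho> ^ m * real (card N) * \<mu> + s}"
  show ?thesis
  proof (cases "N = {}")
    case True
    have "emeasure ?M2 ?E \<le> emeasure ?M2 (space ?M2)" by (intro emeasure_mono) auto
    then show ?thesis using True by (simp add: M2.emeasure_space_1)
  next
    case False
    have finN: "finite N" unfolding N_def by (rule finite_nodes)
    define X where "X v y = \<rho> ^ m * Fav (gw_S J0 \<rho> (\<lambda>u. y (u @ v)) k)" for v y
    have lenN: "length v = m" if "v \<in> N" for v using that by (simp add: N_def)
    have inK: "u @ v \<in> - Iset m" if "v \<in> N" for u v using lenN[OF that] by (simp add: Iset_def)
    have Xmeas: "X v \<in> borel_measurable ?M2" if "v \<in> N" for v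
    proof -
      have "(\<lambda>y u. y (u @ v)) \<in> measurable ?M2 \<Omega>" by (intro shift_meas inK that)
      then have "(\<lambda>y. Fav (gw_S J0 \<rho> (\<lambda>u. y (u @ v)) k)) \<in> borel_measurable ?M2"
        using measurable_comp[OF _ Fav_meas[of k]] by (simp add: o_def)
      then show ?thesis unfolding X_def by simp
    qed
    have EX: "M2.expectation (X v) = \<rho> ^ m * \<mu>" if "v \<in> N" for v
    proof -
      have "M2.expectation (\<lambda>y. Fav (gw_S J0 \<rho> (\<lambda>u. y (u @ v)) k)) = \<mu>"
      proof -
        have "\<mu> = integral\<^sup>L (distr ?M2 \<Omega> (\<lambda>y u. y (u @ v))) (\<lambda>\<omega>. Fav (gw_S J0 \<rho> \<omega> k))"
          unfolding \<mu>_def using lenN[OF that] by (subst distr_shift) auto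
        also have "\<dots> = M2.expectation (\<lambda>y. Fav (gw_S J0 \<rho> (\<lambda>u. y (u @ v)) k))"
          by (intro integral_distr shift_meas inK that Fav_meas)
        finally show ?thesis by simp
      qed
      then show ?thesis unfolding X_def by simp
    qed
    have bnd: "AE y in ?M2. X v y \<in> {0..\<rho> ^ m * Kc}" if "v \<in> N" for v
      using AE_good_PiM[of "- Iset m"]
    proof eventually_elim
      case (elim y)
      then have "\<forall>u. good J0 \<rho> (y (u @ v))" using inK[OF that] by auto
      then have "Fav (gw_S J0 \<rho> (\<lambda>u. y (u @ v)) k) \<le> Fav J0" by (intro Fav_le_J0) simp
      then have "Fav (gw_S J0 \<rho> (\<lambda>u. y (u @ v)) k) \<le> Kc" unfolding Kc_def by simp
      then show ?case unfolding X_def using rho by (simp add: Fav_nonneg)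
    qed
    have ind: "M2.indep_vars (\<lambda>_. borel) X N"
    proof -
      define Kf where "Kf v = range (\<lambda>u. u @ v)" for v :: "nat list"
      have "replicate m 0 \<in> - Iset m" by (simp add: Iset_def)
      then have nI: "- Iset m \<noteq> {}" by blast
      have i0: "M2.indep_vars (\<lambda>_. D) (\<lambda>i \<omega>. \<omega> i) (- Iset m)"
        using indep_coords[of "\<lambda>_. D" "- Iset m"] D nI by simp
      have i1: "M2.indep_vars (\<lambda>v. PiM (Kf v) (\<lambda>_. D)) (\<lambda>v \<omega>. restrict (\<lambda>i. \<omega> i) (Kf v)) N"
      proof (rule M2.indep_vars_restrict[OF i0])
        show "Kf v \<subseteq> - Iset m" if "v \<in> N" for v using inK[OF that] by (auto simp: Kf_def)
        show "disjoint_family_on Kf N"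
          unfolding disjoint_family_on_def Kf_def
        proof (intro ballI impI)
          fix v w assume v: "v \<in> N" and w: "w \<in> N" and "v \<noteq> w"
          show "range (\<lambda>u. u @ v) \<inter> range (\<lambda>u. u @ w) = {}"
          proof (rule ccontr)
            assume "range (\<lambda>u. u @ v) \<inter> range (\<lambda>u. u @ w) \<noteq> {}"
            then obtain u u' where e: "u @ v = u' @ w" by auto
            have "length v = length w" using lenN[OF v] lenN[OF w] by simp
            then have "v = w" using e by (metis append_eq_append_conv)
            then show False using \<open>v \<noteq> w\<close> by simp
          qed
        qed
      qed
      define Y where "Y v z = \<rho> ^ m * Fav (gw_S J0 \<rho> (\<lambda>u. z (u @ v)) k)" for v and z :: gwom
      have Ymeas: "Y v \<in> measurable (PiM (Kf v) (\<lambda>_. D)) borel" if "v \<in> N" for v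
      proof -
        have "(\<lambda>y u. y (u @ v)) \<in> measurable (PiM (Kf v) (\<lambda>_. D)) \<Omega>" by (intro shift_meas) (simp add: Kf_def)
        then have "(\<lambda>y. Fav (gw_S J0 \<rho> (\<lambda>u. y (u @ v)) k)) \<in> borel_measurable (PiM (Kf v) (\<lambda>_. D))"
          using measurable_comp[OF _ Fav_meas[of k]] by (simp add: o_def)
        then show ?thesis unfolding Y_def by simp
      qed
      have "M2.indep_vars (\<lambda>_. borel) (\<lambda>v \<omega>. Y v (restrict (\<lambda>i. \<omega> i) (Kf v))) N"
        by (rule M2.indep_vars_compose2[OF i1 Ymeas])
      moreover have "(\<lambda>\<omega>. Y v (restrict (\<lambda>i. \<omega> i) (Kf v))) = X v" for v
        by (simp add: Y_def X_def Kf_def fun_eq_iff)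
      ultimately show ?thesis by simp
    qed
    interpret H: Hoeffding_ineq ?M2 N X "\<lambda>_. 0" "\<lambda>_. \<rho> ^ m * Kc" "\<Sum>v\<in>N. M2.expectation (X v)"
      by unfold_locales (use finN ind bnd in auto)
    have sumE: "(\<Sum>v\<in>N. M2.expectation (X v)) = \<rho> ^ m * real (card N) * \<mu>"
      using EX by (simp add: sum.cong[OF refl EX])
    have sub: "?E \<subseteq> {y \<in> space ?M2. (\<Sum>v\<in>N. X v y) \<ge> (\<Sum>v\<in>N. M2.expectation (X v)) + s}"
    proof safe
      fix y assume "y \<in> space ?M2" and
        gt: "\<rho> ^ m * real (card N) * \<mu> + s < Fav (gw_S J0 \<rho> (merge (Iset m) (- Iset m) (x, y)) (k + m))"
      have "Fav (gw_S J0 \<rho> (merge (Iset m) (- Iset m) (x, y)) (k + m)) \<le> (\<Sum>v\<in>N. X v y)"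
        using Fav_merge_le[where x=x and y=y and k=k and m=m] unfolding N_def X_def by simp
      then show "(\<Sum>v\<in>N. M2.expectation (X v)) + s \<le> (\<Sum>v\<in>N. X v y)" using gt sumE by simp
    qed
    have pos: "(\<Sum>v\<in>N. (\<rho> ^ m * Kc - 0)\<^sup>2) > 0"
      using False finN rho Kc_pos by (simp add: card_gt_0_iff)
    have "emeasure ?M2 ?E \<le> emeasure ?M2 {y \<in> space ?M2. (\<Sum>v\<in>N. X v y) \<ge> (\<Sum>v\<in>N. M2.expectation (X v)) + s}"
      using sub by (intro emeasure_mono) (use Xmeas finN in measurable)
    also have "\<dots> = ennreal (M2.prob {y \<in> space ?M2. (\<Sum>v\<in>N. X v y) \<ge> (\<Sum>v\<in>N. M2.expectation (X v)) + s})"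
      by (simp add: M2.emeasure_eq_measure)
    also have "\<dots> \<le> ennreal (exp (-2 * s\<^sup>2 / (\<Sum>v\<in>N. (\<rho> ^ m * Kc - 0)\<^sup>2)))"
      using H.Hoeffding_ineq_ge[of s] s pos by (intro ennreal_leI) simp
    also have "exp (-2 * s\<^sup>2 / (\<Sum>v\<in>N. (\<rho> ^ m * Kc - 0)\<^sup>2)) = exp (- (2 / Kc\<^sup>2 * s\<^sup>2) / (\<rho> ^ m * real (card N) * \<rho> ^ m))"
      using Kc_pos by (simp add: field_simps power2_eq_square power_mult_distrib)
    finally show ?thesis .
  qed
qed

end

lemma cond_exp_le_from_sets:
  fixes f h :: "'a \<Rightarrow> real"
  assumes sf: "sigma_finite_subalgebra M F"
    and f: "integrable M f" and hF: "h \<in> borel_measurable F" and hi: "integrable M h"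
    and le: "\<And>G. G \<in> sets F \<Longrightarrow> (\<integral>x\<in>G. f x \<partial>M) \<le> (\<integral>x\<in>G. h x \<partial>M)"
  shows "AE x in M. real_cond_exp M F f x \<le> h x"
proof -
  interpret sigma_finite_subalgebra M F by (rule sf)
  let ?g = "real_cond_exp M F f"
  define E where "E = {x \<in> space M. h x < ?g x}"
  have spF: "space F = space M" using subalg by (simp add: subalgebra_def)
  have EF: "E \<in> sets F"
  proof -
    have "{x \<in> space F. h x < ?g x} \<in> sets F" using hF borel_measurable_cond_exp[of M F f] by measurable
    then show ?thesis unfolding E_def spF .
  qed
  have EM: "E \<in> sets M" using EF subalg by (auto simp: subalgebra_def)
  have gi: "integrable M ?g" using f by (rule real_cond_exp_int)
  have "(\<integral>x\<in>E. ?g x \<partial>M) = (\<integral>x\<in>E. f x \<partial>M)" using real_cond_exp_intA[OF f EF] by simp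
  also have "\<dots> \<le> (\<integral>x\<in>E. h x \<partial>M)" by (rule le[OF EF])
  finally have le1: "(\<integral>x. indicator E x * ?g x \<partial>M) \<le> (\<integral>x. indicator E x * h x \<partial>M)"
    by (simp add: set_lebesgue_integral_def)
  have "(\<integral>x. indicator E x * (?g x - h x) \<partial>M) = (\<integral>x. indicator E x * ?g x - indicator E x * h x \<partial>M)"
    by (simp add: right_diff_distrib)
  also have "\<dots> = (\<integral>x. indicator E x * ?g x \<partial>M) - (\<integral>x. indicator E x * h x \<partial>M)"
    using integrable_mult_indicator[OF EM gi] integrable_mult_indicator[OF EM hi]
    by (intro Bochner_Integration.integral_diff) simp_all
  finally have "(\<integral>x. indicator E x * (?g x - h x) \<partial>M) \<le> 0" using le1 by simp
  moreover have nn: "AE x in M. 0 \<le> indicator E x * (?g x - h x)"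
    by (auto simp: E_def indicator_def)
  moreover have ii: "integrable M (\<lambda>x. indicator E x * (?g x - h x))"
    using integrable_mult_indicator[OF EM gi] integrable_mult_indicator[OF EM hi]
    by (simp add: right_diff_distrib)
  ultimately have "(\<integral>x. indicator E x * (?g x - h x) \<partial>M) = 0"
    using Bochner_Integration.integral_nonneg_AE[OF nn] by linarith
  then have "AE x in M. indicator E x * (?g x - h x) = 0"
    using integral_nonneg_eq_0_iff_AE[OF ii nn] by simp
  with AE_space[of M] show ?thesis
    by eventually_elim (auto simp: E_def indicator_def split: if_splits)
qed

context gwl begin

lemma gw_Z_restrict: "gw_Z \<rho> (restrict \<omega> (Iset m)) m = gw_Z \<rho> \<omega> m"
proof -
  have "{v. length v = m \<and> alive (restrict \<omega> (Iset m)) v} = {v. length v = m \<and> alive \<omega> v}"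
    using alive_dep[of _ "restrict \<omega> (Iset m)" \<omega>] by (auto simp: Iset_def)
  then show ?thesis unfolding gw_Z_alive by simp
qed

lemma gw_Z_merge: "gw_Z \<rho> (merge (Iset m) (- Iset m) (x, y)) m = \<rho> ^ m * real (card {v. length v = m \<and> alive x v})"
  unfolding gw_Z_alive nodes_merge ..

lemma distr_merge_Omega:
  "distr (PiM (Iset m) (\<lambda>_. D) \<Otimes>\<^sub>M PiM (- Iset m) (\<lambda>_. D)) \<Omega> (merge (Iset m) (- Iset m)) = \<Omega>"
  using distr_merge_infinite[of "\<lambda>_. D" "Iset m" "- Iset m"] D unfolding Omega_def by simp

lemma merge_meas: "merge (Iset m) (- Iset m) \<in> measurable (PiM (Iset m) (\<lambda>_. D) \<Otimes>\<^sub>M PiM (- Iset m) (\<lambda>_. D)) \<Omega>"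
  using measurable_merge[of "Iset m" "- Iset m" "\<lambda>_. D"] unfolding Omega_def by simp

lemma restrict_meas: "(\<lambda>\<omega>. restrict \<omega> (Iset m)) \<in> measurable \<Omega> (PiM (Iset m) (\<lambda>_. D))"
  unfolding Omega_def by (rule measurable_restrict_subset) simp

lemma restrict_merge: "x \<in> space (PiM (Iset m) (\<lambda>_. D)) \<Longrightarrow> restrict (merge (Iset m) (- Iset m) (x, y)) (Iset m) = x"
  by (auto simp: space_PiM PiE_iff extensional_def merge_def restrict_def fun_eq_iff)

lemma main_AE:
  fixes m n :: nat and s :: real
  assumes mn: "m < n" and s: "s > 0"
  defines "A \<equiv> {\<omega>' \<in> space \<Omega>. Fav (gw_S J0 \<rho> \<omega>' n) > gw_Z \<rho> \<omega>' m * (\<integral>\<omega>''. Fav (gw_S J0 \<rho> \<omega>'' (n - m)) \<partial>\<Omega>) + s}"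
  shows "AE \<omega> in \<Omega>. real_cond_exp \<Omega> (gw_filt D m) (indicator A) \<omega> \<le> exp (- ((2 / Kc\<^sup>2) * s\<^sup>2) / (gw_Z \<rho> \<omega> m * \<rho> ^ m))"
proof -
  interpret P: prob_space \<Omega> by (rule prob_Omega)
  define k where "k = n - m"
  have nk: "n = k + m" using mn by (simp add: k_def)
  define \<mu> where "\<mu> = (\<integral>\<omega>. Fav (gw_S J0 \<rho> \<omega> k) \<partial>\<Omega>)"
  define c where "c = 2 / Kc\<^sup>2"
  let ?I = "Iset m"
  let ?M1 = "PiM ?I (\<lambda>_. D)"
  let ?M2 = "PiM (- ?I) (\<lambda>_. D)"
  let ?mg = "merge ?I (- ?I)"
  interpret M1: prob_space ?M1 by (rule prob_PiM)
  interpret M2: prob_space ?M2 by (rule prob_PiM)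
  interpret M12: pair_sigma_finite ?M1 ?M2 ..
  define F where "F = gw_filt D m"
  have F_def': "F = vimage_algebra (space \<Omega>) (\<lambda>\<omega>. restrict \<omega> ?I) ?M1"
    unfolding F_def gw_filt_def Iset_def ..
  define h where "h \<omega> = exp (- (c * s\<^sup>2) / (gw_Z \<rho> \<omega> m * \<rho> ^ m))" for \<omega> :: gwom
  define Hx where "Hx x = exp (- (c * s\<^sup>2) / (\<rho> ^ m * real (card {v. length v = m \<and> alive x v}) * \<rho> ^ m))" for x :: gwom
  have A_def': "A = {\<omega>' \<in> space \<Omega>. Fav (gw_S J0 \<rho> \<omega>' n) > gw_Z \<rho> \<omega>' m * \<mu> + s}"
    unfolding A_def \<mu>_def k_def ..
  have A_sets: "A \<in> sets \<Omega>" unfolding A_def' by measurable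
  have rs: "(\<lambda>\<omega>. restrict \<omega> ?I) \<in> space \<Omega> \<rightarrow> space ?M1" using measurable_space[OF restrict_meas] by blast
  have setsF: "sets F = {(\<lambda>\<omega>. restrict \<omega> ?I) -` G' \<inter> space \<Omega> | G'. G' \<in> sets ?M1}"
    unfolding F_def' by (rule sets_vimage_algebra2[OF rs])
  have subalg: "subalgebra \<Omega> F"
    unfolding subalgebra_def
  proof
    show "space F = space \<Omega>" unfolding F_def' by simp
    show "sets F \<subseteq> sets \<Omega>" unfolding setsF using restrict_meas by (auto intro: measurable_sets)
  qed
  have sf: "sigma_finite_subalgebra \<Omega> F"
    by (intro finite_measure_subalgebra_is_sigma_finite) (unfold_locales, rule subalg)
  have h_meas: "h \<in> borel_measurable \<Omega>" unfolding h_def by measurable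
  have h_bnd: "0 \<le> h \<omega> \<and> h \<omega> \<le> 1" for \<omega>
  proof -
    have "0 \<le> gw_Z \<rho> \<omega> m" unfolding gw_Z_def using rho by simp
    then have "0 \<le> (c * s\<^sup>2) / (gw_Z \<rho> \<omega> m * \<rho> ^ m)" unfolding c_def using rho by simp
    then show ?thesis unfolding h_def by simp
  qed
  have h_int: "integrable \<Omega> h"
    by (rule P.integrable_const_bound[where B=1]) (use h_bnd h_meas in auto)
  obtain y0 where y0: "y0 \<in> space ?M2" using M2.not_empty by blast
  have hF: "h \<in> borel_measurable F"
  proof -
    have "(\<lambda>x. h (?mg (x, y0))) \<in> borel_measurable ?M1"
    proof -
      have "(\<lambda>x. (x, y0)) \<in> measurable ?M1 (?M1 \<Otimes>\<^sub>M ?M2)" using y0 by measurable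
      then have "(\<lambda>x. ?mg (x, y0)) \<in> measurable ?M1 \<Omega>" using merge_meas by (rule measurable_comp[unfolded o_def])
      then show ?thesis using h_meas by (rule measurable_comp[unfolded o_def])
    qed
    moreover have "h (?mg (x, y0)) = h x" if "x \<in> space ?M1" for x
    proof -
      have "gw_Z \<rho> (?mg (x, y0)) m = gw_Z \<rho> (restrict (?mg (x, y0)) ?I) m" by (rule gw_Z_restrict[symmetric])
      also have "\<dots> = gw_Z \<rho> x m" using that by (simp add: restrict_merge gw_Z_restrict)
      finally show ?thesis unfolding h_def by simp
    qed
    ultimately have hM1: "h \<in> borel_measurable ?M1" by (rule measurable_cong[THEN iffD1, rotated]) simp
    have "(\<lambda>\<omega>. h (restrict \<omega> ?I)) \<in> borel_measurable F"
      unfolding F_def' using measurable_vimage_algebra1[OF rs] hM1 by (rule measurable_comp[unfolded o_def])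
    moreover have "h (restrict \<omega> ?I) = h \<omega>" for \<omega> unfolding h_def gw_Z_restrict ..
    ultimately show ?thesis by simp
  qed
  have key: "(\<integral>x\<in>G. indicator A x \<partial>\<Omega>) \<le> (\<integral>x\<in>G. h x \<partial>\<Omega>)" if G: "G \<in> sets F" for G
  proof -
    obtain G' where G': "G' \<in> sets ?M1" "G = (\<lambda>\<omega>. restrict \<omega> ?I) -` G' \<inter> space \<Omega>" using G setsF by auto
    have GO: "G \<in> sets \<Omega>" using G subalg by (auto simp: subalgebra_def)
    have GA: "G \<inter> A \<in> sets \<Omega>" using GO A_sets by auto
    have "emeasure \<Omega> (G \<inter> A) = emeasure (distr (?M1 \<Otimes>\<^sub>M ?M2) \<Omega> ?mg) (G \<inter> A)"
      by (simp add: distr_merge_Omega)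
    also have "\<dots> = emeasure (?M1 \<Otimes>\<^sub>M ?M2) (?mg -` (G \<inter> A) \<inter> space (?M1 \<Otimes>\<^sub>M ?M2))"
      by (rule emeasure_distr[OF merge_meas GA])
    also have "\<dots> = (\<integral>\<^sup>+ x. emeasure ?M2 (Pair x -` (?mg -` (G \<inter> A) \<inter> space (?M1 \<Otimes>\<^sub>M ?M2))) \<partial>?M1)"
      by (rule M2.emeasure_pair_measure_alt) (rule measurable_sets[OF merge_meas GA])
    also have "\<dots> \<le> (\<integral>\<^sup>+ x. ennreal (indicator G' x * Hx x) \<partial>?M1)"
    proof (rule nn_integral_mono)
      fix x assume x: "x \<in> space ?M1"
      show "emeasure ?M2 (Pair x -` (?mg -` (G \<inter> A) \<inter> space (?M1 \<Otimes>\<^sub>M ?M2))) \<le> ennreal (indicator G' x * Hx x)"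
      proof (cases "x \<in> G'")
        case True
        have "Pair x -` (?mg -` (G \<inter> A) \<inter> space (?M1 \<Otimes>\<^sub>M ?M2)) \<subseteq>
          {y \<in> space ?M2. Fav (gw_S J0 \<rho> (?mg (x, y)) (k + m)) > \<rho> ^ m * real (card {v. length v = m \<and> alive x v}) * \<mu> + s}"
          using x by (auto simp: A_def' space_pair_measure gw_Z_merge nk)
        then have "emeasure ?M2 (Pair x -` (?mg -` (G \<inter> A) \<inter> space (?M1 \<Otimes>\<^sub>M ?M2))) \<le>
          emeasure ?M2 {y \<in> space ?M2. Fav (gw_S J0 \<rho> (?mg (x, y)) (k + m)) > \<rho> ^ m * real (card {v. length v = m \<and> alive x v}) * \<mu> + s}"
        proof (rule emeasure_mono)
          have "Pair x \<in> measurable ?M2 (?M1 \<Otimes>\<^sub>M ?M2)" using x by (rule measurable_Pair1')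
          then have pm[measurable]: "(\<lambda>y. ?mg (x, y)) \<in> measurable ?M2 \<Omega>"
            using merge_meas by (rule measurable_comp[unfolded o_def])
          show "{y \<in> space ?M2. Fav (gw_S J0 \<rho> (?mg (x, y)) (k + m)) > \<rho> ^ m * real (card {v. length v = m \<and> alive x v}) * \<mu> + s} \<in> sets ?M2"
            by measurable
        qed
        also have "\<dots> \<le> ennreal (Hx x)"
          unfolding Hx_def c_def \<mu>_def by (rule inner_bound[OF s])
        finally show ?thesis using True by simp
      next
        case False
        have "Pair x -` (?mg -` (G \<inter> A) \<inter> space (?M1 \<Otimes>\<^sub>M ?M2)) = {}"
          using x False by (auto simp: G'(2) restrict_merge space_PiM PiE_restrict)
        then show ?thesis by simp
      qed
    qed
    also have "\<dots> = (\<integral>\<^sup>+ \<omega>. ennreal (indicator G \<omega> * h \<omega>) \<partial>\<Omega>)"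
    proof -
      have fm: "(\<lambda>\<omega>. ennreal (indicator G \<omega> * h \<omega>)) \<in> borel_measurable \<Omega>"
        using GO h_meas by measurable
      have "(\<integral>\<^sup>+ \<omega>. ennreal (indicator G \<omega> * h \<omega>) \<partial>\<Omega>)
          = (\<integral>\<^sup>+ \<omega>. ennreal (indicator G \<omega> * h \<omega>) \<partial>distr (?M1 \<Otimes>\<^sub>M ?M2) \<Omega> ?mg)"
        by (simp add: distr_merge_Omega)
      also have "\<dots> = (\<integral>\<^sup>+ p. ennreal (indicator G (?mg p) * h (?mg p)) \<partial>(?M1 \<Otimes>\<^sub>M ?M2))"
        by (rule nn_integral_distr[OF merge_meas]) (simp add: fm)
      also have "\<dots> = (\<integral>\<^sup>+ x. \<integral>\<^sup>+ y. ennreal (indicator G (?mg (x, y)) * h (?mg (x, y))) \<partial>?M2 \<partial>?M1)"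
        by (rule M2.nn_integral_fst[symmetric]) (use fm merge_meas in measurable)
      also have "\<dots> = (\<integral>\<^sup>+ x. ennreal (indicator G' x * Hx x) \<partial>?M1)"
      proof (rule nn_integral_cong)
        fix x assume x: "x \<in> space ?M1"
        have "(\<integral>\<^sup>+ y. ennreal (indicator G (?mg (x, y)) * h (?mg (x, y))) \<partial>?M2) = (\<integral>\<^sup>+ y. ennreal (indicator G' x * Hx x) \<partial>?M2)"
        proof (rule nn_integral_cong)
          fix y assume y: "y \<in> space ?M2"
          have "?mg (x, y) \<in> space \<Omega>" using measurable_space[OF merge_meas, of "(x, y)"] x y by (simp add: space_pair_measure)
          then have "indicator G (?mg (x, y)) = (indicator G' x :: real)"
            using x by (simp add: G'(2) restrict_merge indicator_def space_PiM PiE_restrict)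
          moreover have "h (?mg (x, y)) = Hx x" unfolding h_def Hx_def gw_Z_merge ..
          ultimately show "ennreal (indicator G (?mg (x, y)) * h (?mg (x, y))) = ennreal (indicator G' x * Hx x)" by simp
        qed
        also have "\<dots> = ennreal (indicator G' x * Hx x)" by (simp add: M2.emeasure_space_1)
        finally show "(\<integral>\<^sup>+ y. ennreal (indicator G (?mg (x, y)) * h (?mg (x, y))) \<partial>?M2) = ennreal (indicator G' x * Hx x)" .
      qed
      finally show ?thesis by simp
    qed
    also have "\<dots> = ennreal (\<integral>\<omega>. indicator G \<omega> * h \<omega> \<partial>\<Omega>)"
    proof (rule nn_integral_eq_integral)
      show "integrable \<Omega> (\<lambda>\<omega>. indicator G \<omega> * h \<omega>)"
        using integrable_mult_indicator[OF GO h_int] by simp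
    qed (use h_bnd in auto)
    finally have le: "emeasure \<Omega> (G \<inter> A) \<le> ennreal (\<integral>\<omega>. indicator G \<omega> * h \<omega> \<partial>\<Omega>)" .
    have "(\<integral>x\<in>G. indicator A x \<partial>\<Omega>) = measure \<Omega> (G \<inter> A)"
      unfolding set_lebesgue_integral_def using GA by (simp add: indicator_inter_arith[symmetric])
    also have "\<dots> \<le> (\<integral>\<omega>. indicator G \<omega> * h \<omega> \<partial>\<Omega>)"
    proof -
      have "0 \<le> (\<integral>\<omega>. indicator G \<omega> * h \<omega> \<partial>\<Omega>)"
        by (intro Bochner_Integration.integral_nonneg) (simp add: h_bnd)
      then show ?thesis using le by (auto simp: P.emeasure_eq_measure ennreal_le_iff2)
    qed
    also have "\<dots> = (\<integral>x\<in>G. h x \<partial>\<Omega>)" unfolding set_lebesgue_integral_def by simp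
    finally show ?thesis .
  qed
  have "AE \<omega> in \<Omega>. real_cond_exp \<Omega> F (indicator A) \<omega> \<le> h \<omega>"
  proof (rule cond_exp_le_from_sets[OF sf _ hF h_int key])
    have "integrable \<Omega> (\<lambda>x. indicator A x *\<^sub>R (1::real))"
      using A_sets by (intro Bochner_Integration.integrable_indicator) (auto simp: P.emeasure_eq_measure)
    then show "integrable \<Omega> (indicator A :: gwom \<Rightarrow> real)" by simp
  qed
  then show ?thesis unfolding F_def h_def c_def .
qed

end

theorem lemma3p5:
  fixes J0 :: "(real^2) set" and \<rho> :: real and D :: "(nat \<times> (nat \<Rightarrow> real^2)) measure"
  assumes "compact J0" and "closure (interior J0) = J0" and "finite (components J0)"
    and "0 < \<rho>" and "\<rho> < 1"
    and "prob_space D"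
    and "sets D = sets (count_space UNIV \<Otimes>\<^sub>M (\<Pi>\<^sub>M i\<in>(UNIV::nat set). (borel :: (real^2) measure)))"
    and "\<exists>B::nat. AE d in D. fst d \<le> B"
    and "AE d in D. \<forall>i < fst d. (\<lambda>x. \<rho> *\<^sub>R x + snd d i) ` J0 \<subseteq> J0"
    and "(\<integral>d. real (fst d) \<partial>D) = 1 / \<rho>"
  shows "\<exists>c>0. \<forall>s>0. \<forall>m n::nat. m < n \<longrightarrow>
     (AE \<omega> in gw_space D.
        real_cond_exp (gw_space D) (gw_filt D m)
          (indicator {\<omega>' \<in> space (gw_space D).
              Fav (gw_S J0 \<rho> \<omega>' n) >
                gw_Z \<rho> \<omega>' m * (\<integral>\<omega>''. Fav (gw_S J0 \<rho> \<omega>'' (n - m)) \<partial>gw_space D) + s}) \<omega>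
        \<le> exp (- (c * s\<^sup>2) / (gw_Z \<rho> \<omega> m * \<rho> ^ m)))"
proof -
  have good: "AE d in D. good J0 \<rho> d" using assms(9) unfolding good_def .
  interpret gwl J0 \<rho> D using assms(1) assms(4) assms(6) assms(7) good by (rule gwl.intro)
  show ?thesis
  proof (intro exI[of _ "2 / Kc\<^sup>2"] conjI allI impI)
    show "2 / Kc\<^sup>2 > 0" using Kc_pos by simp
    fix s :: real and m n :: nat assume s: "s > 0" and mn: "m < n"
    show "AE \<omega> in gw_space D.
        real_cond_exp (gw_space D) (gw_filt D m)
          (indicator {\<omega>' \<in> space (gw_space D).
              Fav (gw_S J0 \<rho> \<omega>' n) >
                gw_Z \<rho> \<omega>' m * (\<integral>\<omega>''. Fav (gw_S J0 \<rho> \<omega>'' (n - m)) \<partial>gw_space D) + s}) \<omega>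
        \<le> exp (- (2 / Kc\<^sup>2 * s\<^sup>2) / (gw_Z \<rho> \<omega> m * \<rho> ^ m))"
      using main_AE[OF mn s] by simp
  qed
qed

end
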